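(* Let $N\ge1$, $1<p<\infty$, $m>p'$ and $\chi,M>0$. The functional $\mathcal F_0$ has a unique radially symmetric nonincreasing minimizer over $\mathcal Y_M$, namely $$\rho_0=\Big(\frac{\chi}{p}\Big)^{\frac1{m-p'}}1_{B_{R_0}},\qquad R_0=\Big(\frac{M}{\omega_N}\Big(\frac p\chi\Big)^{\frac1{m-p'}}\Big)^{1/N}.$$
   Context: Notation. $\omega_N$ is the volume of the unit ball, $B_R$ is the ball of radius $R$ centered at the origin, and $p'=p/(p-1)$. Admissible class. $\mathcal Y_M=\{\rho\in L^1_+\cap L^m(\mathbb R^N):\ \int\rho=M,\ \int x\rho=0\}$. Limit functional. $\displaystyle\mathcal F_0(\rho)=\frac1{m-1}\int\rho^m-\frac{\chi}{p'}\int\rho^{p'}$. *)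

theory Defs
  imports "HOL-Analysis.Analysis"
begin

definition conj_exp :: "real \<Rightarrow> real" where
  "conj_exp p = p / (p - 1)"

definition omega :: "'n::euclidean_space itself \<Rightarrow> real" where
  "omega _ = measure lborel (ball (0::'n) 1)"

definition Y_adm :: "real \<Rightarrow> real \<Rightarrow> ('n::euclidean_space \<Rightarrow> real) set" where
  "Y_adm m M = {\<rho>. \<rho> \<in> borel_measurable lborel
      \<and> (\<forall>x. 0 \<le> \<rho> x)
      \<and> integrable lborel \<rho>
      \<and> integrable lborel (\<lambda>x. \<rho> x powr m)
      \<and> (\<integral>x. \<rho> x \<partial>lborel) = M
      \<and> integrable lborel (\<lambda>x. \<rho> x *\<^sub>R x)
      \<and> (\<integral>x. \<rho> x *\<^sub>R x \<partial>lborel) = 0}"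

definition F0 :: "real \<Rightarrow> real \<Rightarrow> real \<Rightarrow> ('n::euclidean_space \<Rightarrow> real) \<Rightarrow> real" where
  "F0 m p chi \<rho> = 1 / (m - 1) * (\<integral>x. \<rho> x powr m \<partial>lborel)
      - chi / conj_exp p * (\<integral>x. \<rho> x powr conj_exp p \<partial>lborel)"

definition radial_nonincr :: "('n::euclidean_space \<Rightarrow> real) \<Rightarrow> bool" where
  "radial_nonincr \<rho> \<longleftrightarrow> (\<exists>f::real \<Rightarrow> real.
      (\<forall>x. \<rho> x = f (norm x)) \<and> (\<forall>s t. 0 \<le> s \<longrightarrow> s \<le> t \<longrightarrow> f t \<le> f s))"

definition is_minimizer :: "real \<Rightarrow> real \<Rightarrow> real \<Rightarrow> real \<Rightarrow> ('n::euclidean_space \<Rightarrow> real) \<Rightarrow> bool" where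
  "is_minimizer m p chi M \<rho> \<longleftrightarrow> \<rho> \<in> Y_adm m M \<and> (\<forall>\<sigma>::'n \<Rightarrow> real. \<sigma> \<in> Y_adm m M \<longrightarrow> F0 m p chi \<rho> \<le> F0 m p chi \<sigma>)"

end

theory Submission
  imports Defs
begin

lemma key_strict:
  fixes a m chi s t :: real
  assumes a1: "1 < a" and am: "a < m" and chi: "chi > 0" and s: "s > 0"
    and sk: "s powr (m-a) = chi*(a-1)/a" and t: "t > 0" and ts: "t \<noteq> s"
  shows "t powr (m-1)/(m-1) - chi/a * t powr (a-1) > s powr (m-1)/(m-1) - chi/a * s powr (a-1)"
proof -
  define h where "h = (\<lambda>x::real. x powr (m-1)/(m-1) - chi/a * x powr (a-1))"
  have der: "DERIV h x :> x powr (a-2) * (x powr (m-a) - s powr (m-a))" if "x > 0" for x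
  proof -
    have "DERIV h x :> (m-1) * x powr (m-1-1) / (m-1) - chi/a * ((a-1) * x powr (a-1-1))"
      unfolding h_def using that
      by (intro derivative_eq_intros refl) (use a1 am in auto)
    moreover have "(m-1) * x powr (m-1-1) / (m-1) - chi/a * ((a-1) * x powr (a-1-1))
        = x powr (a-2) * (x powr (m-a) - s powr (m-a))"
    proof -
      have "x powr (a-2) * x powr (m-a) = x powr (m-2)" using that by (simp add: powr_add[symmetric])
      have m1: "m - 1 \<noteq> 0" "a \<noteq> 0" using a1 am by auto
      have "(m-1) * x powr (m-1-1) / (m-1) - chi/a * ((a-1) * x powr (a-1-1))
          = x powr (m-2) - chi*(a-1)/a * x powr (a-2)" using m1 by simp
      also have "\<dots> = x powr (a-2) * (x powr (m-a) - chi*(a-1)/a)"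
        using \<open>x powr (a-2) * x powr (m-a) = x powr (m-2)\<close> by (simp add: algebra_simps)
      finally show ?thesis using sk by simp
    qed
    ultimately show ?thesis by simp
  qed
  have cont: "continuous_on {u..v} h" if "0 < u" for u v
    using that a1 am unfolding h_def by (intro continuous_intros) auto
  show ?thesis
  proof (cases "t > s")
    case True
    have "h s < h t"
    proof (rule DERIV_pos_imp_increasing_open[OF True _ cont[OF s]])
      fix x assume x: "s < x" "x < t"
      have "x powr (m-a) > s powr (m-a)" using x s am by (intro powr_less_mono2) auto
      then show "\<exists>y. DERIV h x :> y \<and> y > 0" using der[of x] x s by (intro exI[of _ _]) (auto intro!: mult_pos_pos)
    qed
    then show ?thesis unfolding h_def by simp
  next
    case False
    then have ts': "t < s" using ts by simp
    have "h t > h s"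
    proof (rule DERIV_neg_imp_decreasing_open[OF ts' _ cont[OF t]])
      fix x assume x: "t < x" "x < s"
      have "x powr (m-a) < s powr (m-a)" using x t am by (intro powr_less_mono2) auto
      then show "\<exists>y. DERIV h x :> y \<and> y < 0" using der[of x] x t
        by (intro exI[of _ _]) (auto intro!: mult_pos_neg)
    qed
    then show ?thesis unfolding h_def by simp
  qed
qed

lemma phi_ineq:
  fixes a m chi s t :: real
  assumes a1: "1 < a" and am: "a < m" and chi: "chi > 0" and s: "s > 0"
    and sk: "s powr (m-a) = chi*(a-1)/a" and t: "t \<ge> 0"
  shows "(s powr (m-1)/(m-1) - chi/a * s powr (a-1)) * t \<le> 1/(m-1) * t powr m - chi/a * t powr a"
    and "(s powr (m-1)/(m-1) - chi/a * s powr (a-1)) * t = 1/(m-1) * t powr m - chi/a * t powr a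
         \<Longrightarrow> t = 0 \<or> t = s"
    and "(s powr (m-1)/(m-1) - chi/a * s powr (a-1)) * s = 1/(m-1) * s powr m - chi/a * s powr a"
proof -
  have sp: "x powr m = x * x powr (m-1)" "x powr a = x * x powr (a-1)" if "x > 0" for x
    using that by (simp_all add: powr_mult_base)
  have eq: "1/(m-1) * x powr m - chi/a * x powr a = x * (x powr (m-1)/(m-1) - chi/a * x powr (a-1))"
    if "x > 0" for x using sp[OF that] by (simp add: algebra_simps)
  show "(s powr (m-1)/(m-1) - chi/a * s powr (a-1)) * s = 1/(m-1) * s powr m - chi/a * s powr a"
    using eq[OF s] by simp
  show "(s powr (m-1)/(m-1) - chi/a * s powr (a-1)) * t \<le> 1/(m-1) * t powr m - chi/a * t powr a"
  proof (cases "t = 0 \<or> t = s")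
    case True then show ?thesis using eq[OF s] by auto
  next
    case False
    then have "t > 0" "t \<noteq> s" using t by auto
    from key_strict[OF a1 am chi s sk this] show ?thesis
      unfolding eq[OF \<open>t > 0\<close>] using \<open>t > 0\<close> by (simp add: mult.commute)
  qed
  show "t = 0 \<or> t = s" if h: "(s powr (m-1)/(m-1) - chi/a * s powr (a-1)) * t = 1/(m-1) * t powr m - chi/a * t powr a"
  proof (rule ccontr)
    assume "\<not> (t = 0 \<or> t = s)"
    then have "t > 0" "t \<noteq> s" using t by auto
    from key_strict[OF a1 am chi s sk this] h show False
      unfolding eq[OF \<open>t > 0\<close>] using \<open>t > 0\<close> by (simp add: mult.commute)
  qed
qed

lemma integrable_powr_mid:
  fixes \<sigma> :: "'b \<Rightarrow> real"
  assumes meas: "\<sigma> \<in> borel_measurable M" and nn: "\<forall>x. 0 \<le> \<sigma> x" and i1: "integrable M \<sigma>"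
    and im: "integrable M (\<lambda>x. \<sigma> x powr m)" and a1: "1 < a" and am: "a < m"
  shows "integrable M (\<lambda>x. \<sigma> x powr a)"
proof (rule Bochner_Integration.integrable_bound[where f="\<lambda>x. \<sigma> x + \<sigma> x powr m"])
  show "integrable M (\<lambda>x. \<sigma> x + \<sigma> x powr m)" using i1 im by auto
  show "(\<lambda>x. \<sigma> x powr a) \<in> borel_measurable M" using meas by measurable
  have "norm (t powr a) \<le> norm (t + t powr m)" if t: "t \<ge> 0" for t :: real
  proof (cases "t \<le> 1")
    case True
    have "t powr a \<le> t powr 1" using True t a1
      by (cases "t = 0") (auto intro: powr_le_one_le)
    then have "t powr a \<le> t + t powr m" using powr_ge_zero[of t m] powr_one[of t] t by linarith
    then show ?thesis using t by simp
  next
    case False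
    have "t powr a \<le> t powr m" using False am by (intro powr_mono) auto
    then have "t powr a \<le> t + t powr m" using t by linarith
    then show ?thesis using t by simp
  qed
  then show "AE x in M. norm (\<sigma> x powr a) \<le> norm (\<sigma> x + \<sigma> x powr m)"
    using nn by auto
qed

theorem mainTheorem15:
  fixes p m chi M :: real
  assumes "1 < p" and "m > conj_exp p" and "chi > 0" and "M > 0"
  defines "R0 \<equiv> (M / omega TYPE(real^'n) * (p / chi) powr (1 / (m - conj_exp p)))
                  powr (1 / real CARD('n))"
  defines "\<rho>0 \<equiv> (\<lambda>x::real^'n. (chi / p) powr (1 / (m - conj_exp p)) * indicator (ball 0 R0) x)"
  shows "is_minimizer m p chi M \<rho>0 \<and> radial_nonincr \<rho>0
    \<and> (\<forall>\<rho>::real^'n \<Rightarrow> real. is_minimizer m p chi M \<rho> \<and> radial_nonincr \<rho>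
          \<longrightarrow> (AE x in lborel. \<rho> x = \<rho>0 x))"
proof -
  note p1 = \<open>1 < p\<close> and chi = \<open>chi > 0\<close> and M0 = \<open>M > 0\<close>
  define a where "a = conj_exp p"
  have ma: "a < m" using assms(2) by (simp add: a_def)
  have a_eq: "a = p / (p - 1)" by (simp add: a_def conj_exp_def)
  have a1: "1 < a" using p1 by (simp add: a_eq)
  have chia: "chi*(a-1)/a = chi/p" using p1 by (simp add: a_eq field_simps)
  define s where "s = (chi/p) powr (1/(m-a))"
  have s0: "s > 0" using chi p1 by (simp add: s_def)
  have sk: "s powr (m-a) = chi*(a-1)/a"
    using ma chi p1 by (simp add: s_def powr_powr chia)
  define c where "c = s powr (m-1)/(m-1) - chi/a * s powr (a-1)"
  define \<phi> where "\<phi> = (\<lambda>t::real. 1/(m-1) * t powr m - chi/a * t powr a)"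
  have phi_ge: "c * t \<le> \<phi> t" if "t \<ge> 0" for t
    unfolding c_def \<phi>_def by (rule phi_ineq(1)[OF a1 ma chi s0 sk that])
  have phi_eq: "t = 0 \<or> t = s" if "t \<ge> 0" "c * t = \<phi> t" for t
    using phi_ineq(2)[OF a1 ma chi s0 sk that(1)] that(2) unfolding c_def \<phi>_def by blast
  have phi_s: "\<phi> s = c * s"
    using phi_ineq(3)[OF a1 ma chi s0 sk order.refl] unfolding c_def \<phi>_def by simp
  have phi_0: "\<phi> 0 = 0" unfolding \<phi>_def by simp
  have Y_props: "\<sigma> \<in> borel_measurable lborel" "\<forall>x. 0 \<le> \<sigma> x" "integrable lborel \<sigma>"
      "integrable lborel (\<lambda>x. \<sigma> x powr m)" "(\<integral>x. \<sigma> x \<partial>lborel) = M"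
    if "\<sigma> \<in> Y_adm m M" for \<sigma> :: "real^'n \<Rightarrow> real"
    using that unfolding Y_adm_def by auto
  have int_a: "integrable lborel (\<lambda>x. \<sigma> x powr a)" if "\<sigma> \<in> Y_adm m M" for \<sigma> :: "real^'n \<Rightarrow> real"
    using integrable_powr_mid[OF Y_props(1-4)[OF that] a1 ma] .
  have int_phi: "integrable lborel (\<lambda>x. \<phi> (\<sigma> x))" if "\<sigma> \<in> Y_adm m M" for \<sigma> :: "real^'n \<Rightarrow> real"
    unfolding \<phi>_def using Y_props(4)[OF that] int_a[OF that] by auto
  have F0_eq: "F0 m p chi \<sigma> = (\<integral>x. \<phi> (\<sigma> x) \<partial>lborel)" if "\<sigma> \<in> Y_adm m M" for \<sigma> :: "real^'n \<Rightarrow> real"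
    unfolding \<phi>_def F0_def a_def[symmetric]
    using Y_props(4)[OF that] int_a[OF that] by simp
  have lower: "c * M \<le> F0 m p chi \<sigma>" if "\<sigma> \<in> Y_adm m M" for \<sigma> :: "real^'n \<Rightarrow> real"
  proof -
    have "c * M = (\<integral>x. c * \<sigma> x \<partial>lborel)" using Y_props(5)[OF that] by simp
    also have "\<dots> \<le> (\<integral>x. \<phi> (\<sigma> x) \<partial>lborel)"
      using Y_props(2,3)[OF that] int_phi[OF that] phi_ge by (intro integral_mono) auto
    finally show ?thesis using F0_eq[OF that] by simp
  qed
  define B where "B = ball (0::real^'n) R0"
  have rho0_s: "\<rho>0 = (\<lambda>x. s * indicator B x)" by (simp add: \<rho>0_def s_def a_def B_def)
  define \<omega> where "\<omega> = omega TYPE(real^'n)"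
  have om: "\<omega> = unit_ball_vol (real CARD('n))"
    unfolding \<omega>_def omega_def using content_ball[of 1 "0::real^'n"] by simp
  have om0: "\<omega> > 0" using om by simp
  have sinv: "s * (p/chi) powr (1/(m-a)) = 1"
    unfolding s_def using chi p1 by (simp add: powr_mult[symmetric])
  define X where "X = M / \<omega> * (p/chi) powr (1/(m-a))"
  have X0: "X > 0" using M0 om0 chi p1 by (simp add: X_def)
  have R0X: "R0 = X powr (1 / real CARD('n))" by (simp add: R0_def X_def \<omega>_def a_def)
  have R00: "R0 > 0" using X0 by (simp add: R0X)
  have R0N: "R0 ^ CARD('n) = X"
  proof -
    have "R0 ^ CARD('n) = R0 powr real CARD('n)" using R00 by (simp add: powr_realpow)
    also have "\<dots> = X" using X0 by (simp add: R0X powr_powr)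
    finally show ?thesis .
  qed
  have measB: "measure lborel B = M / s"
  proof -
    have "measure lborel B = \<omega> * R0 ^ CARD('n)"
      unfolding B_def om using content_ball[of R0 "0::real^'n"] R00 by simp
    also have "\<dots> = M * (p/chi) powr (1/(m-a))" using om0 by (simp add: R0N X_def)
    also have "\<dots> = M / s" using sinv s0 by (simp add: field_simps)
    finally show ?thesis .
  qed
  have emB: "emeasure lborel B < \<infinity>"
    unfolding B_def using emeasure_ball[of R0 "0::real^'n"] R00 by simp
  have Bsets[measurable]: "B \<in> sets lborel" by (simp add: B_def)
  have int_ind: "integrable lborel (\<lambda>x::real^'n. s * indicator B x)"
    using integrable_real_indicator[OF Bsets emB] by (intro integrable_mult_right) auto
  have rho0_pow: "(\<lambda>x. \<rho>0 x powr m) = (\<lambda>x. s powr m * indicator B x)"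
    unfolding rho0_s by (auto simp: indicator_def)
  have mass0: "(\<integral>x. \<rho>0 x \<partial>lborel) = M"
    unfolding rho0_s using measB s0 by simp
  have int_cm: "integrable lborel (\<lambda>x. \<rho>0 x *\<^sub>R x)"
  proof (rule Bochner_Integration.integrable_bound[where f="\<lambda>x. (s * R0) * indicator B x"])
    show "integrable lborel (\<lambda>x::real^'n. (s * R0) * indicator B x)"
      using integrable_real_indicator[OF Bsets emB] by (intro integrable_mult_right) auto
    show "(\<lambda>x. \<rho>0 x *\<^sub>R x) \<in> borel_measurable lborel" unfolding rho0_s by measurable
    have "norm (\<rho>0 x *\<^sub>R x) \<le> norm ((s * R0) * indicator B x)" for x
      unfolding rho0_s using s0 R00 by (auto simp: indicator_def B_def dist_norm)
    then show "AE x in lborel. norm (\<rho>0 x *\<^sub>R x) \<le> norm ((s * R0) * indicator B x)" by simp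
  qed
  have refl_lb: "distr lborel borel uminus = (lborel :: (real^'n) measure)"
    using lborel_affine[of "-1" "0::real^'n"] by (simp add: density_1)
  have cm0: "(\<integral>x. \<rho>0 x *\<^sub>R x \<partial>lborel) = 0"
  proof -
    let ?g = "\<lambda>x::real^'n. \<rho>0 x *\<^sub>R x"
    have gm: "?g \<in> borel_measurable borel" unfolding rho0_s by measurable
    have "(\<integral>x. ?g x \<partial>lborel) = (\<integral>x. ?g x \<partial>(distr lborel borel uminus))" by (simp add: refl_lb)
    also have "\<dots> = (\<integral>x. ?g (- x) \<partial>lborel)" by (rule integral_distr) (auto simp: gm)
    also have "\<dots> = (\<integral>x. - ?g x \<partial>lborel)"
      by (intro Bochner_Integration.integral_cong) (auto simp: rho0_s B_def indicator_def)
    also have "\<dots> = - (\<integral>x. ?g x \<partial>lborel)" by simp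
    finally have "(\<integral>x. ?g x \<partial>lborel) = - (\<integral>x. ?g x \<partial>lborel)" .
    then have "(2::real) *\<^sub>R (\<integral>x. ?g x \<partial>lborel) = 0"
      unfolding scaleR_2 by (metis add.right_inverse)
    then show ?thesis by simp
  qed
  have rho0_Y: "\<rho>0 \<in> Y_adm m M"
    unfolding Y_adm_def
    using int_ind rho0_pow mass0 int_cm cm0 s0 emB
    by (auto simp: rho0_s intro!: integrable_mult_right)
  have F0_rho0: "F0 m p chi \<rho>0 = c * M"
  proof -
    have "\<phi> (\<rho>0 x) = c * \<rho>0 x" for x
      unfolding rho0_s by (auto simp: indicator_def phi_s phi_0)
    then have "F0 m p chi \<rho>0 = (\<integral>x. c * \<rho>0 x \<partial>lborel)" using F0_eq[OF rho0_Y] by simp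
    then show ?thesis using mass0 by simp
  qed
  have minim: "is_minimizer m p chi M \<rho>0"
    unfolding is_minimizer_def using rho0_Y F0_rho0 lower by auto
  have rad: "radial_nonincr \<rho>0"
    unfolding radial_nonincr_def
    by (rule exI[of _ "\<lambda>r. s * (if r < R0 then 1 else 0)"])
       (use s0 in \<open>auto simp: rho0_s B_def indicator_def dist_norm\<close>)
  have uniq: "AE x in lborel. \<rho> x = \<rho>0 x"
    if mr: "is_minimizer m p chi M \<rho>" "radial_nonincr \<rho>" for \<rho> :: "real^'n \<Rightarrow> real"
  proof -
    have Y: "\<rho> \<in> Y_adm m M" using mr(1) unfolding is_minimizer_def by auto
    have le: "F0 m p chi \<rho> \<le> c * M"
      using mr(1) rho0_Y F0_rho0 unfolding is_minimizer_def by auto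
    obtain f where f: "\<And>x. \<rho> x = f (norm x)" "\<And>s t. 0 \<le> s \<Longrightarrow> s \<le> t \<Longrightarrow> f t \<le> f s"
      using mr(2) unfolding radial_nonincr_def by auto
    note YP = Y_props[OF Y]
    have int_d: "integrable lborel (\<lambda>x. \<phi> (\<rho> x) - c * \<rho> x)"
      using int_phi[OF Y] YP(3) by auto
    have dnn: "0 \<le> \<phi> (\<rho> x) - c * \<rho> x" for x using phi_ge[of "\<rho> x"] YP(2) by auto
    have "(\<integral>x. \<phi> (\<rho> x) - c * \<rho> x \<partial>lborel) = F0 m p chi \<rho> - c * M"
      using int_phi[OF Y] YP(3,5) F0_eq[OF Y] by (simp add: Bochner_Integration.integral_diff)
    moreover have "0 \<le> (\<integral>x. \<phi> (\<rho> x) - c * \<rho> x \<partial>lborel)"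
      using dnn by (intro Bochner_Integration.integral_nonneg) auto
    ultimately have "(\<integral>x. \<phi> (\<rho> x) - c * \<rho> x \<partial>lborel) = 0" using le by linarith
    then have "AE x in lborel. \<phi> (\<rho> x) - c * \<rho> x = 0"
      using integral_nonneg_eq_0_iff_AE[OF int_d] dnn by auto
    then have AE01: "AE x in lborel. \<rho> x = 0 \<or> \<rho> x = s"
      by eventually_elim (use phi_eq YP(2) in auto)
    define u where "u = (\<lambda>x. \<rho>0 x - \<rho> x * indicator B x)"
    define v where "v = (\<lambda>x. \<rho> x - \<rho> x * indicator B x)"
    have int_rB: "integrable lborel (\<lambda>x. \<rho> x * indicator B x)"
      using integrable_real_mult_indicator[OF Bsets YP(3)] .
    have int_u: "integrable lborel u" unfolding u_def using rho0_Y int_rB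
      unfolding Y_adm_def by auto
    have int_v: "integrable lborel v" unfolding v_def using YP(3) int_rB by auto
    have "(\<integral>x. u x \<partial>lborel) - (\<integral>x. v x \<partial>lborel) = (\<integral>x. u x - v x \<partial>lborel)"
      using int_u int_v by (simp add: Bochner_Integration.integral_diff)
    also have "\<dots> = (\<integral>x. \<rho>0 x - \<rho> x \<partial>lborel)" by (simp add: u_def v_def)
    also have "\<dots> = 0" using rho0_Y YP(3,5) mass0
      unfolding Y_adm_def by (simp add: Bochner_Integration.integral_diff)
    finally have uv: "(\<integral>x. u x \<partial>lborel) = (\<integral>x. v x \<partial>lborel)" by simp
    have unn: "AE x in lborel. 0 \<le> u x"
      using AE01 by eventually_elim (use s0 in \<open>auto simp: u_def rho0_s indicator_def\<close>)
    have vnn: "AE x in lborel. 0 \<le> v x"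
      using YP(2) by (auto simp: v_def indicator_def)
    have noboth: False if x: "x \<in> B" "\<rho> x = 0" and y: "y \<notin> B" "\<rho> y = s" for x y
    proof -
      have "norm x < R0" "R0 \<le> norm y" using x(1) y(1) by (auto simp: B_def)
      then have "f (norm y) \<le> f (norm x)" by (intro f(2)) auto
      then show False using x(2) y(2) f(1)[of x] f(1)[of y] s0 by simp
    qed
    have both: "(AE x in lborel. u x = 0) \<and> (AE x in lborel. v x = 0)"
    proof (cases "\<exists>x\<in>B. \<rho> x = 0")
      case True
      then have ny: "\<rho> y \<noteq> s" if "y \<notin> B" for y using noboth that by blast
      have AEv: "AE x in lborel. v x = 0"
        using AE01 by eventually_elim (use ny in \<open>auto simp: v_def indicator_def\<close>)
      then have "(\<integral>x. v x \<partial>lborel) = 0" using integral_nonneg_eq_0_iff_AE[OF int_v vnn] by simp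
      then have "(\<integral>x. u x \<partial>lborel) = 0" using uv by simp
      then have "AE x in lborel. u x = 0" using integral_nonneg_eq_0_iff_AE[OF int_u unn] by simp
      with AEv show ?thesis by simp
    next
      case False
      have AEu: "AE x in lborel. u x = 0"
        using AE01 by eventually_elim (use False in \<open>auto simp: u_def rho0_s indicator_def\<close>)
      then have "(\<integral>x. u x \<partial>lborel) = 0" using integral_nonneg_eq_0_iff_AE[OF int_u unn] by simp
      then have "(\<integral>x. v x \<partial>lborel) = 0" using uv by simp
      then have "AE x in lborel. v x = 0" using integral_nonneg_eq_0_iff_AE[OF int_v vnn] by simp
      with AEu show ?thesis by simp
    qed
    then have "AE x in lborel. u x = 0 \<and> v x = 0" by (simp add: AE_conj_iff)
    then show ?thesis
      by eventually_elim (auto simp: u_def v_def rho0_s indicator_def split: if_splits)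
  qed
  show ?thesis using minim rad uniq by blast
qed

end
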